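(* Let $f \in \mathbb{R}[x_1,\ldots,x_n]$ be a nonzero polynomial. Then there is a monomial $m$ occurring in $f$ (i.e. with nonzero coefficient in $f$) such that $\dim \partial^{=k} f \geq \dim \partial^{=k} m$ for every integer $k \geq 0$. In particular, if every monomial occurring in $f$ contains at least $r$ distinct variables, then $\dim \partial^{=k} f \geq \binom{r}{k}$ for every $k$.
   Context: For $\beta=(\beta_1,\ldots,\beta_n)\in\mathbb{N}^n$, $\partial_\beta f$ denotes the partial derivative of $f$ obtained by differentiating $\beta_i$ times with respect to $x_i$ for each $i$. For $k\ge 0$, $\partial^{=k} f$ denotes the real linear space spanned by all $\partial_\beta f$ with $\beta_1+\cdots+\beta_n=k$. The dimension $\dim \partial^{=k} m$ for a monomial $m$ is defined in the same way (it does not depend on the nonzero scalar multiple of $m$). *)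

theory Defs
  imports "HOL-Analysis.Analysis" "HOL-Analysis.Finite_Function_Topology"
begin

(* Real polynomials in variables x_0, x_1, ... are represented as finitely supported
  maps from exponent vectors (finitely supported nat-valued maps) to real coefficients.*)

type_synonym rpoly = "(nat \<Rightarrow>\<^sub>0 nat) \<Rightarrow>\<^sub>0 real"

definition in_vars :: "nat \<Rightarrow> rpoly \<Rightarrow> bool" where
  "in_vars n f \<longleftrightarrow> (\<forall>\<gamma>\<in>Poly_Mapping.keys f. Poly_Mapping.keys \<gamma> \<subseteq> {..<n})"

definition mdeg :: "(nat \<Rightarrow>\<^sub>0 nat) \<Rightarrow> nat" where
  "mdeg \<beta> = (\<Sum>i\<in>Poly_Mapping.keys \<beta>. Poly_Mapping.lookup \<beta> i)"

definition pderiv_multi :: "(nat \<Rightarrow>\<^sub>0 nat) \<Rightarrow> rpoly \<Rightarrow> rpoly" where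
  "pderiv_multi \<beta> f = Abs_poly_mapping (\<lambda>\<alpha>.
      (\<Prod>i\<in>Poly_Mapping.keys \<beta>. fact (Poly_Mapping.lookup \<alpha> i + Poly_Mapping.lookup \<beta> i) / fact (Poly_Mapping.lookup \<alpha> i)) * Poly_Mapping.lookup f (\<alpha> + \<beta>))"

definition partials_eq :: "nat \<Rightarrow> nat \<Rightarrow> rpoly \<Rightarrow> rpoly set" where
  "partials_eq n k f = span {pderiv_multi \<beta> f | \<beta>. Poly_Mapping.keys \<beta> \<subseteq> {..<n} \<and> mdeg \<beta> = k}"

definition monom_of :: "(nat \<Rightarrow>\<^sub>0 nat) \<Rightarrow> rpoly" where
  "monom_of \<gamma> = Poly_Mapping.single \<gamma> 1"

end

theory Submission
  imports Defs
begin

lemma lookup_scaleR_pm: "Poly_Mapping.lookup (r *\<^sub>R (x::'a\<Rightarrow>\<^sub>0real)) i = r * Poly_Mapping.lookup x i"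
  unfolding scaleR_poly_mapping_def
  by (subst lookup_Abs_poly_mapping) (auto intro: finite_subset[OF _ finite_keys[of x]] simp: in_keys_iff)

lemma lookup_pd: "Poly_Mapping.lookup (pderiv_multi \<beta> f) \<gamma> =
   (\<Prod>i\<in>Poly_Mapping.keys \<beta>. fact (Poly_Mapping.lookup \<gamma> i + Poly_Mapping.lookup \<beta> i) / fact (Poly_Mapping.lookup \<gamma> i)) * Poly_Mapping.lookup f (\<gamma> + \<beta>)"
proof -
  have "{\<gamma>. (\<Prod>i\<in>Poly_Mapping.keys \<beta>. fact (Poly_Mapping.lookup \<gamma> i + Poly_Mapping.lookup \<beta> i) / fact (Poly_Mapping.lookup \<gamma> i)) * Poly_Mapping.lookup f (\<gamma> + \<beta>) \<noteq> (0::real)}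
     \<subseteq> (\<lambda>\<delta>. \<delta> - \<beta>) ` Poly_Mapping.keys f"
  proof
    fix \<gamma> assume "\<gamma> \<in> {\<gamma>. (\<Prod>i\<in>Poly_Mapping.keys \<beta>. fact (Poly_Mapping.lookup \<gamma> i + Poly_Mapping.lookup \<beta> i) / fact (Poly_Mapping.lookup \<gamma> i)) * Poly_Mapping.lookup f (\<gamma> + \<beta>) \<noteq> (0::real)}"
    then have "\<gamma> + \<beta> \<in> Poly_Mapping.keys f" by (auto simp: in_keys_iff)
    then show "\<gamma> \<in> (\<lambda>\<delta>. \<delta> - \<beta>) ` Poly_Mapping.keys f" by (intro image_eqI[of _ _ "\<gamma> + \<beta>"]) auto
  qed
  then have "finite {\<gamma>. (\<Prod>i\<in>Poly_Mapping.keys \<beta>. fact (Poly_Mapping.lookup \<gamma> i + Poly_Mapping.lookup \<beta> i) / fact (Poly_Mapping.lookup \<gamma> i)) * Poly_Mapping.lookup f (\<gamma> + \<beta>) \<noteq> (0::real)}"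
    by (rule finite_subset) auto
  then show ?thesis unfolding pderiv_multi_def by (simp add: lookup_Abs_poly_mapping)
qed

lemma cf_pos: "(\<Prod>i\<in>Poly_Mapping.keys \<beta>. fact (Poly_Mapping.lookup \<gamma> i + Poly_Mapping.lookup \<beta> i) / fact (Poly_Mapping.lookup \<gamma> i) :: real) > 0"
  by (auto intro!: prod_pos)

lemma pd_monom_zero:
  assumes "\<not>(\<forall>i. Poly_Mapping.lookup \<beta> i \<le> Poly_Mapping.lookup \<alpha> i)"
  shows "pderiv_multi \<beta> (monom_of \<alpha>) = 0"
proof (rule poly_mapping_eqI)
  fix \<gamma>
  have "\<alpha> \<noteq> \<gamma> + \<beta>"
  proof
    assume "\<alpha> = \<gamma> + \<beta>"
    then have "\<forall>i. Poly_Mapping.lookup \<beta> i \<le> Poly_Mapping.lookup \<alpha> i" by (simp add: lookup_add)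
    with assms show False by blast
  qed
  then show "Poly_Mapping.lookup (pderiv_multi \<beta> (monom_of \<alpha>)) \<gamma> = Poly_Mapping.lookup 0 \<gamma>"
    by (simp add: lookup_pd monom_of_def lookup_single)
qed

lemma diff_add_pw:
  assumes "\<forall>i. Poly_Mapping.lookup \<beta> i \<le> Poly_Mapping.lookup (\<alpha>::nat\<Rightarrow>\<^sub>0nat) i"
  shows "(\<alpha> - \<beta>) + \<beta> = \<alpha>"
  using assms by (intro poly_mapping_eqI) (simp add: lookup_add lookup_minus)

lemma finite_pw: "finite {\<beta>. \<forall>i. Poly_Mapping.lookup \<beta> i \<le> Poly_Mapping.lookup (\<alpha>::nat\<Rightarrow>\<^sub>0nat) i}"
proof (rule inj_on_finite[where f="\<lambda>\<beta>. restrict (Poly_Mapping.lookup \<beta>) (Poly_Mapping.keys \<alpha>)" and B="PiE (Poly_Mapping.keys \<alpha>) (\<lambda>i. {..Poly_Mapping.lookup \<alpha> i})"])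
  show "inj_on (\<lambda>\<beta>. restrict (Poly_Mapping.lookup \<beta>) (Poly_Mapping.keys \<alpha>)) {\<beta>. \<forall>i. Poly_Mapping.lookup \<beta> i \<le> Poly_Mapping.lookup \<alpha> i}"
  proof (rule inj_onI)
    fix x y assume x: "x \<in> {\<beta>. \<forall>i. Poly_Mapping.lookup \<beta> i \<le> Poly_Mapping.lookup \<alpha> i}" and y: "y \<in> {\<beta>. \<forall>i. Poly_Mapping.lookup \<beta> i \<le> Poly_Mapping.lookup \<alpha> i}"
      and e: "restrict (Poly_Mapping.lookup x) (Poly_Mapping.keys \<alpha>) = restrict (Poly_Mapping.lookup y) (Poly_Mapping.keys \<alpha>)"
    show "x = y"
    proof (rule poly_mapping_eqI)
      fix i show "Poly_Mapping.lookup x i = Poly_Mapping.lookup y i"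
      proof (cases "i \<in> Poly_Mapping.keys \<alpha>")
        case True then show ?thesis using fun_cong[OF e, of i] by simp
      next
        case False then show ?thesis using x y by (auto simp: in_keys_iff) (metis le_zero_eq)+
      qed
    qed
  qed
qed (auto simp: finite_PiE)

lemma lookup_le_mdeg: "Poly_Mapping.lookup \<beta> i \<le> mdeg \<beta>"
proof (cases "i \<in> Poly_Mapping.keys \<beta>")
  case True then show ?thesis unfolding mdeg_def by (intro member_le_sum) auto
next
  case False then show ?thesis by (simp add: in_keys_iff)
qed

lemma finite_deg: "finite {\<beta>::nat\<Rightarrow>\<^sub>0nat. Poly_Mapping.keys \<beta> \<subseteq> {..<n} \<and> mdeg \<beta> = k}"
proof (rule inj_on_finite[where f="\<lambda>\<beta>. restrict (Poly_Mapping.lookup \<beta>) {..<n}" and B="PiE {..<n} (\<lambda>i. {..k})"])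
  show "inj_on (\<lambda>\<beta>. restrict (Poly_Mapping.lookup \<beta>) {..<n}) {\<beta>::nat\<Rightarrow>\<^sub>0nat. Poly_Mapping.keys \<beta> \<subseteq> {..<n} \<and> mdeg \<beta> = k}"
  proof (rule inj_onI)
    fix x y assume x: "x \<in> {\<beta>::nat\<Rightarrow>\<^sub>0nat. Poly_Mapping.keys \<beta> \<subseteq> {..<n} \<and> mdeg \<beta> = k}"
      and y: "y \<in> {\<beta>::nat\<Rightarrow>\<^sub>0nat. Poly_Mapping.keys \<beta> \<subseteq> {..<n} \<and> mdeg \<beta> = k}"
      and e: "restrict (Poly_Mapping.lookup x) {..<n} = restrict (Poly_Mapping.lookup y) {..<n}"
    show "x = y"
    proof (rule poly_mapping_eqI)
      fix i show "Poly_Mapping.lookup x i = Poly_Mapping.lookup y i"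
      proof (cases "i \<in> {..<n}")
        case True then show ?thesis using fun_cong[OF e, of i] by simp
      next
        case False
        then have "i \<notin> Poly_Mapping.keys x" "i \<notin> Poly_Mapping.keys y" using x y by auto
        then show ?thesis by (simp add: in_keys_iff)
      qed
    qed
  qed
qed (auto simp: finite_PiE lookup_le_mdeg split: if_splits)

lemma key_zero:
  fixes \<alpha> \<beta> \<beta>' :: "nat\<Rightarrow>\<^sub>0nat" and f :: rpoly
  assumes max: "\<forall>\<gamma>\<in>Poly_Mapping.keys f. \<gamma> \<le> \<alpha>"
    and pw: "\<forall>i. Poly_Mapping.lookup \<beta> i \<le> Poly_Mapping.lookup \<alpha> i"
    and lt: "\<beta> < \<beta>'"
  shows "Poly_Mapping.lookup (pderiv_multi \<beta>' f) (\<alpha> - \<beta>) = 0"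
proof -
  have "Poly_Mapping.lookup f (\<alpha> - \<beta> + \<beta>') = 0"
  proof (rule ccontr)
    assume "Poly_Mapping.lookup f (\<alpha> - \<beta> + \<beta>') \<noteq> 0"
    then have "\<alpha> - \<beta> + \<beta>' \<le> \<alpha>" using max by (auto simp: in_keys_iff)
    moreover have "\<alpha> - \<beta> + \<beta> < \<alpha> - \<beta> + \<beta>'" using lt by (rule add_strict_left_mono)
    ultimately show False using diff_add_pw[OF pw] by simp
  qed
  then show ?thesis by (simp add: lookup_pd)
qed

lemma key_nonzero:
  fixes \<alpha> \<beta> :: "nat\<Rightarrow>\<^sub>0nat" and f :: rpoly
  assumes "\<alpha> \<in> Poly_Mapping.keys f"
    and pw: "\<forall>i. Poly_Mapping.lookup \<beta> i \<le> Poly_Mapping.lookup \<alpha> i"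
  shows "Poly_Mapping.lookup (pderiv_multi \<beta> f) (\<alpha> - \<beta>) \<noteq> 0"
  using assms cf_pos[of \<beta> "\<alpha> - \<beta>"] diff_add_pw[OF pw] by (simp add: lookup_pd in_keys_iff)

lemma main_bounds:
  fixes \<alpha> :: "nat\<Rightarrow>\<^sub>0nat" and f :: rpoly and k n :: nat
  assumes inv: "in_vars n f" and ak: "\<alpha> \<in> Poly_Mapping.keys f"
    and max: "\<forall>\<gamma>\<in>Poly_Mapping.keys f. \<gamma> \<le> \<alpha>"
  defines "B \<equiv> {\<beta>. Poly_Mapping.keys \<beta> \<subseteq> {..<n} \<and> mdeg \<beta> = k \<and> (\<forall>i. Poly_Mapping.lookup \<beta> i \<le> Poly_Mapping.lookup \<alpha> i)}"
  shows "card B \<le> dim (partials_eq n k f)" and "dim (partials_eq n k (monom_of \<alpha>)) \<le> card B"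
    and "card (Poly_Mapping.keys \<alpha>) choose k \<le> card B"
proof -
  have finB: "finite B" unfolding B_def by (rule finite_subset[OF _ finite_pw[of \<alpha>]]) auto
  have pwB: "\<And>\<beta>. \<beta> \<in> B \<Longrightarrow> \<forall>i. Poly_Mapping.lookup \<beta> i \<le> Poly_Mapping.lookup \<alpha> i"
    unfolding B_def by auto
  define pd where "pd = (\<lambda>\<beta>. pderiv_multi \<beta> f)"
  have neq: "pd \<beta>' \<noteq> pd \<beta>" if "\<beta> \<in> B" "\<beta> < \<beta>'" for \<beta> \<beta>'
    using key_zero[OF max pwB[OF that(1)] that(2)] key_nonzero[OF ak pwB[OF that(1)]]
    unfolding pd_def by metis
  have inj: "inj_on pd B"
  proof (rule inj_onI)
    fix x y assume "x \<in> B" "y \<in> B" "pd x = pd y"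
    then show "x = y" using neq by (metis linorder_neqE)
  qed
  have indep: "independent (pd ` B)"
    unfolding real_vector.independent_explicit_module
  proof (intro allI impI, rule ccontr)
    fix t u v
    assume t: "finite t" "t \<subseteq> pd ` B" and s: "(\<Sum>v\<in>t. u v *\<^sub>R v) = 0" and v: "v \<in> t" and uv: "u v \<noteq> 0"
    define T where "T = pd -` t \<inter> B \<inter> {\<beta>. u (pd \<beta>) \<noteq> 0}"
    have finT: "finite T" unfolding T_def
      by (rule finite_subset[OF _ finite_vimage_IntI[OF t(1) inj]]) auto
    obtain \<beta>0 where "\<beta>0 \<in> B" "v = pd \<beta>0" using v t by auto
    then have "\<beta>0 \<in> T" using v uv unfolding T_def by auto
    then have neT: "T \<noteq> {}" by auto
    define bs where "bs = Min T"
    have bsT: "bs \<in> T" using Min_in[OF finT neT] bs_def by simp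
    have bsB: "bs \<in> B" and bst: "pd bs \<in> t" and ubs: "u (pd bs) \<noteq> 0" using bsT unfolding T_def by auto
    have "0 = Poly_Mapping.lookup (\<Sum>v\<in>t. u v *\<^sub>R v) (\<alpha> - bs)" using s by simp
    also have "\<dots> = (\<Sum>v\<in>t. u v * Poly_Mapping.lookup v (\<alpha> - bs))"
      by (simp add: lookup_sum lookup_scaleR_pm)
    also have "\<dots> = u (pd bs) * Poly_Mapping.lookup (pd bs) (\<alpha> - bs) + (\<Sum>v\<in>t - {pd bs}. u v * Poly_Mapping.lookup v (\<alpha> - bs))"
      by (rule sum.remove[OF t(1) bst])
    also have "(\<Sum>v\<in>t - {pd bs}. u v * Poly_Mapping.lookup v (\<alpha> - bs)) = 0"
    proof (rule sum.neutral, rule ballI)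
      fix w assume "w \<in> t - {pd bs}"
      then have w: "w \<in> t" "w \<noteq> pd bs" by auto
      obtain \<beta> where b: "\<beta> \<in> B" "w = pd \<beta>" using w t by auto
      show "u w * Poly_Mapping.lookup w (\<alpha> - bs) = 0"
      proof (cases "u w = 0")
        case False
        then have "\<beta> \<in> T" using b w unfolding T_def by auto
        then have "bs \<le> \<beta>" using finT bs_def by simp
        moreover have "\<beta> \<noteq> bs" using b w by auto
        ultimately have "bs < \<beta>" by simp
        then show ?thesis using key_zero[OF max pwB[OF bsB]] b unfolding pd_def by simp
      qed simp
    qed
    finally show False using ubs key_nonzero[OF ak pwB[OF bsB]] unfolding pd_def by simp
  qed
  have sub: "pd ` B \<subseteq> partials_eq n k f"
    unfolding partials_eq_def pd_def B_def by (rule subset_trans[OF _ span_superset]) blast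
  define G where "G = {pderiv_multi \<beta> f | \<beta>. Poly_Mapping.keys \<beta> \<subseteq> {..<n} \<and> mdeg \<beta> = k}"
  have "G = (\<lambda>\<beta>. pderiv_multi \<beta> f) ` {\<beta>. Poly_Mapping.keys \<beta> \<subseteq> {..<n} \<and> mdeg \<beta> = k}"
    unfolding G_def by blast
  then have finG: "finite G" using finite_imageI[OF finite_deg[of n k]] by simp
  have subG: "pd ` B \<subseteq> G" unfolding G_def pd_def B_def by blast
  obtain B' where B': "pd ` B \<subseteq> B'" "B' \<subseteq> G" "independent B'" "G \<subseteq> span B'"
    using real_vector.maximal_independent_subset_extend[OF subG indep] by blast
  have "span B' = span (partials_eq n k f)"
    unfolding partials_eq_def real_vector.span_span G_def[symmetric]
    using B' by (metis real_vector.span_mono real_vector.span_span subset_antisym)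
  then have dB: "dim (partials_eq n k f) = card B'" by (rule real_vector.dim_eq_card[OF _ B'(3)])
  have "card B = card (pd ` B)" using card_image[OF inj] by simp
  also have "\<dots> \<le> card B'" using B' finG by (intro card_mono) (auto intro: finite_subset)
  finally show "card B \<le> dim (partials_eq n k f)" using dB by simp
next
  have finB: "finite B" unfolding B_def by (rule finite_subset[OF _ finite_pw[of \<alpha>]]) auto
  define pm where "pm = (\<lambda>\<beta>. pderiv_multi \<beta> (monom_of \<alpha>))"
  have "{pderiv_multi \<beta> (monom_of \<alpha>) | \<beta>. Poly_Mapping.keys \<beta> \<subseteq> {..<n} \<and> mdeg \<beta> = k} \<subseteq> span (pm ` B)"
  proof
    fix x assume "x \<in> {pderiv_multi \<beta> (monom_of \<alpha>) | \<beta>. Poly_Mapping.keys \<beta> \<subseteq> {..<n} \<and> mdeg \<beta> = k}"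
    then obtain \<beta> where b: "x = pm \<beta>" "Poly_Mapping.keys \<beta> \<subseteq> {..<n}" "mdeg \<beta> = k" unfolding pm_def by auto
    show "x \<in> span (pm ` B)"
    proof (cases "\<forall>i. Poly_Mapping.lookup \<beta> i \<le> Poly_Mapping.lookup \<alpha> i")
      case True
      then have "\<beta> \<in> B" using b unfolding B_def by auto
      then show ?thesis using b by (simp add: real_vector.span_base)
    next
      case False
      then show ?thesis using b pd_monom_zero[OF False] unfolding pm_def by (simp add: span_zero)
    qed
  qed
  then have "partials_eq n k (monom_of \<alpha>) \<subseteq> span (pm ` B)"
    unfolding partials_eq_def by (rule real_vector.span_minimal[OF _ real_vector.subspace_span])
  then have "dim (partials_eq n k (monom_of \<alpha>)) \<le> card (pm ` B)"
    using finB by (intro real_vector.dim_le_card) auto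
  also have "\<dots> \<le> card B" using finB by (rule card_image_le)
  finally show "dim (partials_eq n k (monom_of \<alpha>)) \<le> card B" .
next
  have finB: "finite B" unfolding B_def by (rule finite_subset[OF _ finite_pw[of \<alpha>]]) auto
  define ind :: "nat set \<Rightarrow> nat \<Rightarrow>\<^sub>0 nat" where "ind = (\<lambda>S. Abs_poly_mapping (\<lambda>i. if i \<in> S then 1 else (0::nat)))"
  have lk: "Poly_Mapping.lookup (ind S) = (\<lambda>i. if i \<in> S then 1 else 0)" if "finite S" for S
    unfolding ind_def using that by (subst lookup_Abs_poly_mapping) (auto intro: finite_subset[OF _ that])
  have ks: "Poly_Mapping.keys (ind S) = S" if "finite S" for S
    using lk[OF that] by (auto simp: in_keys_iff split: if_splits)
  let ?SS = "{S. S \<subseteq> Poly_Mapping.keys \<alpha> \<and> card S = k}"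
  have "inj_on ind ?SS"
  proof (rule inj_onI)
    fix S1 S2 assume "S1 \<in> ?SS" "S2 \<in> ?SS" and e: "ind S1 = ind S2"
    then have "finite S1" "finite S2" by (auto intro: finite_subset)
    then show "S1 = S2" using ks e by metis
  qed
  moreover have "ind ` ?SS \<subseteq> B"
  proof
    fix x assume "x \<in> ind ` ?SS"
    then obtain S where S: "S \<subseteq> Poly_Mapping.keys \<alpha>" "card S = k" "x = ind S" by auto
    have fS: "finite S" using finite_subset[OF S(1) finite_keys] .
    have kx: "Poly_Mapping.keys x = S" using S(3) ks[OF fS] by simp
    have lx: "Poly_Mapping.lookup x = (\<lambda>i. if i \<in> S then 1 else 0)" using S(3) lk[OF fS] by simp
    have "Poly_Mapping.keys \<alpha> \<subseteq> {..<n}" using inv ak unfolding in_vars_def by blast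
    then have k1: "Poly_Mapping.keys x \<subseteq> {..<n}" using kx S(1) by blast
    have "mdeg x = (\<Sum>i\<in>S. 1)" unfolding mdeg_def kx lx by (rule sum.cong) auto
    then have k2: "mdeg x = k" using S(2) by simp
    have k3: "\<forall>i. Poly_Mapping.lookup x i \<le> Poly_Mapping.lookup \<alpha> i"
    proof
      fix i show "Poly_Mapping.lookup x i \<le> Poly_Mapping.lookup \<alpha> i"
      proof (cases "i \<in> S")
        case True
        then have "Poly_Mapping.lookup \<alpha> i \<noteq> 0" using S(1) by (auto simp: in_keys_iff)
        then show ?thesis using True lx by simp
      qed (simp add: lx)
    qed
    show "x \<in> B" unfolding B_def using k1 k2 k3 by blast
  qed
  ultimately have "card ?SS \<le> card B" using finB by (intro card_inj_on_le)
  then show "card (Poly_Mapping.keys \<alpha>) choose k \<le> card B" by (simp add: n_subsets)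
qed

theorem theorem1:
  fixes n :: nat and f :: rpoly
  assumes "in_vars n f" and "f \<noteq> 0"
  shows "(\<exists>\<gamma>\<in>Poly_Mapping.keys f. \<forall>k::nat. dim (partials_eq n k f) \<ge> dim (partials_eq n k (monom_of \<gamma>)))
    \<and> (\<forall>r::nat. (\<forall>\<gamma>\<in>Poly_Mapping.keys f. card (Poly_Mapping.keys \<gamma>) \<ge> r) \<longrightarrow>
          (\<forall>k::nat. dim (partials_eq n k f) \<ge> r choose k))"
proof -
  have ne: "Poly_Mapping.keys f \<noteq> {}" using assms(2) by simp
  define \<alpha> where "\<alpha> = Max (Poly_Mapping.keys f)"
  have ak: "\<alpha> \<in> Poly_Mapping.keys f" unfolding \<alpha>_def using Max_in[OF finite_keys ne] .
  have max: "\<forall>\<gamma>\<in>Poly_Mapping.keys f. \<gamma> \<le> \<alpha>" unfolding \<alpha>_def by simp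
  note mb = main_bounds[OF assms(1) ak max]
  have p1: "\<exists>\<gamma>\<in>Poly_Mapping.keys f. \<forall>k::nat. dim (partials_eq n k f) \<ge> dim (partials_eq n k (monom_of \<gamma>))"
    using ak mb(1,2) by (meson le_trans)
  have p2: "\<forall>k::nat. dim (partials_eq n k f) \<ge> r choose k"
    if "\<forall>\<gamma>\<in>Poly_Mapping.keys f. card (Poly_Mapping.keys \<gamma>) \<ge> r" for r
  proof
    fix k
    have "r choose k \<le> card (Poly_Mapping.keys \<alpha>) choose k"
      using that ak by (intro binomial_right_mono) auto
    then show "dim (partials_eq n k f) \<ge> r choose k" using mb(1,3)[of k] by linarith
  qed
  show ?thesis using p1 p2 by blast
qed

end
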